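(* Let $\mathcal{X},\mathcal{Y}$ be finite sets, $P_X$ a probability distribution on $\mathcal{X}$, $d:\mathcal{X}\times\mathcal{Y}\to[0,\infty)$ a distortion function, and $Q_Y$ a probability distribution on $\mathcal{Y}$. Let $R\ge 0$ be such that $e^R$ is an integer, and let $M=e^R+1$. Let $X\sim P_X$ and let $Y_0,\dots,Y_{M-1}$ be i.i.d. with law $Q_Y$, independent of $X$. Then $$\mathbb{E}\Big[\min_{0\le i\le M-1} d(X,Y_i)\Big]=\int_0^1 \tilde D(w,Q_Y)\,G_M'(w)\,dw,$$ where $G_M(w)=-(1-w)^{M-1}\big((M-1)w+1\big)$ and $\tilde D(w,Q_Y)$ is as defined in the context.
   Context: For $x\in\mathcal{X}$, $y\in\mathcal{Y}$, $u\in[0,1]$ let $p_{c,x,y,u}=Q_Y\{y': d(x,y')<d(x,y)\}+u\cdot Q_Y\{y': d(x,y')=d(x,y)\}$. For $w\in(0,1]$ define $$\tilde D(w,Q_Y)=w^{-1}\,\mathbb{E}\big[d(X,Y)\,\mathbf{1}\{p_{c,X,Y,U}\le w\}\big],$$ where $X\sim P_X$, $Y\sim Q_Y$ and $U$ uniform on $[0,1]$ are independent. *)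

theory Defs
  imports "HOL-Probability.Probability"
begin

definition p_c :: "('a \<Rightarrow> 'b \<Rightarrow> real) \<Rightarrow> 'b pmf \<Rightarrow> 'a \<Rightarrow> 'b \<Rightarrow> real \<Rightarrow> real" where
  "p_c d Q x y u = measure_pmf.prob Q {y'. d x y' < d x y}
                   + u * measure_pmf.prob Q {y'. d x y' = d x y}"

definition Dtilde :: "'a pmf \<Rightarrow> ('a \<Rightarrow> 'b \<Rightarrow> real) \<Rightarrow> real \<Rightarrow> 'b pmf \<Rightarrow> real" where
  "Dtilde P d w Q = (1 / w) *
     integral\<^sup>L (measure_pmf P \<Otimes>\<^sub>M (measure_pmf Q \<Otimes>\<^sub>M uniform_measure lborel {0..1::real}))
       (\<lambda>(x, y, u). d x y * (if p_c d Q x y u \<le> w then 1 else 0))"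

definition G :: "nat \<Rightarrow> real \<Rightarrow> real" where
  "G M w = - ((1 - w) ^ (M - 1)) * ((real M - 1) * w + 1)"

end

theory Submission
  imports Defs
begin

lemma dk: fixes a :: real shows
 "((\<lambda>t. C - real (n+2)*(1-t)^(Suc n)*(t-a) - (1-t)^(Suc (Suc n))) has_real_derivative
     (real (n+2) * (real (n+2) - 1) * (1-t)^n) * (t-a)) (at t)"
  apply (rule derivative_eq_intros refl)+
  apply (simp add: algebra_simps)
  done
lemma dh2: "((\<lambda>t. - real (n+2)*(1-t)^(Suc n)) has_real_derivative (real (n+2) * (real (n+2) - 1) * (1-t)^n)) (at t)"
  apply (rule derivative_eq_intros refl)+
  apply (simp add: algebra_simps)
  done

lemma cl_integral:
  fixes a q :: real and n :: nat
  assumes q: "q > 0" and a: "a \<ge> 0" and aq: "a + q \<le> 1"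
  shows "((\<lambda>w. max 0 (min 1 ((w - a)/q)) * (real (n+2) * (real (n+2) - 1) * (1-w)^n))
           has_integral ((1-a)^(n+2) - (1-a-q)^(n+2))/q) {0..1}"
proof -
  define b where "b = a + q"
  define h1 where "h1 t = ((1-a)^(Suc (Suc n)) - real (n+2)*(1-t)^(Suc n)*(t-a) - (1-t)^(Suc (Suc n)))/q" for t
  define h2 where "h2 t = - real (n+2)*(1-t)^(Suc n)" for t :: real
  define H where "H w = h1 (max a (min w b)) + h2 (max w b) - h2 b" for w
  define f where "f w = max 0 (min 1 ((w - a)/q)) * (real (n+2) * (real (n+2) - 1) * (1-w)^n)" for w
  have ab: "a < b" using q by (simp add: b_def)
  have dh1: "(h1 has_real_derivative (real (n+2) * (real (n+2) - 1) * (1-t)^n) * (t-a) / q) (at t)" for t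
    unfolding h1_def by (intro DERIV_cdivide dk)
  have cont: "continuous_on {0..1} H"
    unfolding H_def h1_def h2_def by (intro continuous_intros) (use q in auto)
  have der: "(H has_vector_derivative f w) (at w)" if w: "w \<in> {0<..<1} - {a, b}" for w
  proof -
    have "w < a \<or> (a < w \<and> w < b) \<or> b < w" using w by auto
    then have "(H has_real_derivative f w) (at w)"
    proof (elim disjE conjE)
      assume "w < a"
      show ?thesis
      proof (rule has_field_derivative_transform_within_open[where S="{..<a}" and f="\<lambda>_. 0"])
        have "(w - a)/q < 0" using \<open>w < a\<close> q by (simp add: divide_neg_pos)
        then have "f w = 0" by (simp add: f_def)
        then show "((\<lambda>_. 0) has_real_derivative f w) (at w)" by simp
        show "\<And>x. x \<in> {..<a} \<Longrightarrow> 0 = H x" using ab by (auto simp: H_def h1_def max_def min_def)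
      qed (use \<open>w < a\<close> in auto)
    next
      assume "a < w" "w < b"
      show ?thesis
      proof (rule has_field_derivative_transform_within_open[where S="{a<..<b}" and f="h1"])
        have "f w = (real (n+2) * (real (n+2) - 1) * (1-w)^n) * (w-a) / q"
          using \<open>a < w\<close> \<open>w < b\<close> q by (simp add: f_def b_def)
        then show "(h1 has_real_derivative f w) (at w)" using dh1[of w] by simp
        show "\<And>x. x \<in> {a<..<b} \<Longrightarrow> h1 x = H x" using ab by (auto simp: H_def max_def min_def)
      qed (use \<open>a < w\<close> \<open>w < b\<close> in auto)
    next
      assume "b < w"
      show ?thesis
      proof (rule has_field_derivative_transform_within_open[where S="{b<..}" and f="\<lambda>x. h1 b + h2 x - h2 b"])
        have fw: "f w = (real (n+2) * (real (n+2) - 1) * (1-w)^n)"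
          using \<open>b < w\<close> q by (simp add: f_def b_def)
        then show "((\<lambda>x. h1 b + h2 x - h2 b) has_real_derivative f w) (at w)" 
        proof -
          have d: "(h2 has_real_derivative f w) (at w)" unfolding h2_def fw by (rule dh2)
          show ?thesis using DERIV_diff[OF DERIV_add[OF DERIV_const[of "h1 b"] d] DERIV_const[of "h2 b"]] by simp
        qed
        show "\<And>x. x \<in> {b<..} \<Longrightarrow> h1 b + h2 x - h2 b = H x" using ab by (auto simp: H_def max_def min_def)
      qed (use \<open>b < w\<close> in auto)
    qed
    then show ?thesis by (simp add: has_real_derivative_iff_has_vector_derivative)
  qed
  have "(f has_integral (H 1 - H 0)) {0..1}"
    by (rule fundamental_theorem_of_calculus_interior_strong[where S="{a,b}"]) (use der cont in auto)
  moreover have "H 1 = ((1-a)^(n+2) - (1-a-q)^(n+2))/q"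
  proof -
    have "H 1 = h1 b - h2 b" using ab aq by (simp add: H_def h2_def b_def max_def min_def)
    also have "\<dots> = ((1-a)^(n+2) - (1-a-q)^(n+2))/q"
      using q unfolding h1_def h2_def b_def by (simp add: field_simps)
    finally show ?thesis .
  qed
  moreover have "H 0 = 0"
    using ab a by (simp add: H_def h1_def max_def min_def)
  ultimately have "(f has_integral ((1-a)^(n+2) - (1-a-q)^(n+2))/q) {0..1}" by simp
  then show ?thesis unfolding f_def .
qed

lemma pmf_pair_integral:
  fixes P :: "'a::finite pmf" and N :: "'c measure" and f :: "'a \<times> 'c \<Rightarrow> real"
  assumes N: "prob_space N" and meas: "\<And>x. (\<lambda>z. f (x,z)) \<in> borel_measurable N"
    and bnd: "\<And>x z. \<bar>f (x,z)\<bar> \<le> B"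
  shows "integral\<^sup>L (measure_pmf P \<Otimes>\<^sub>M N) f = (\<Sum>x\<in>UNIV. pmf P x * integral\<^sup>L N (\<lambda>z. f (x,z)))"
proof -
  interpret N: prob_space N by (rule N)
  interpret PN: pair_prob_space "measure_pmf P" N
    by (simp add: pair_prob_space_def pair_sigma_finite_def N measure_pmf.prob_space_axioms
        prob_space_imp_sigma_finite)
  have fm: "f \<in> borel_measurable (measure_pmf P \<Otimes>\<^sub>M N)"
  proof -
    have "f \<in> borel_measurable (count_space UNIV \<Otimes>\<^sub>M N)"
      by (rule measurable_pair_measure_countable1) (auto intro: meas)
    then show ?thesis
      by (subst measurable_cong_sets[OF sets_pair_measure_cong[OF sets_measure_pmf_count_space refl] refl])
  qed
  have int: "integrable (measure_pmf P \<Otimes>\<^sub>M N) f"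
    using bnd by (intro PN.P.integrable_const_bound[where B=B] fm) (auto simp: case_prod_beta)
  have "integral\<^sup>L (measure_pmf P \<Otimes>\<^sub>M N) f = (\<integral>x. (\<integral>z. f (x, z) \<partial>N) \<partial>measure_pmf P)"
    by (rule PN.integral_fst'[OF int, symmetric])
  also have "\<dots> = (\<Sum>x\<in>UNIV. (\<integral>z. f (x, z) \<partial>N) * pmf P x)"
    by (rule integral_measure_pmf_real) auto
  finally show ?thesis by (simp add: mult.commute)
qed

lemma pmf_pair_integral':
  fixes P :: "'a::finite pmf" and N :: "'c measure" and f :: "'a \<Rightarrow> 'c \<Rightarrow> real"
  assumes N: "prob_space N" and meas: "\<And>x. f x \<in> borel_measurable N"
    and bnd: "\<And>x z. \<bar>f x z\<bar> \<le> B"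
  shows "integral\<^sup>L (measure_pmf P \<Otimes>\<^sub>M N) (\<lambda>(x,z). f x z) = (\<Sum>x\<in>UNIV. pmf P x * integral\<^sup>L N (f x))"
  using pmf_pair_integral[OF N, of "case_prod f" B P] meas bnd by simp

lemma unif_integral:
  fixes a q w :: real
  assumes q: "q > 0"
  shows "(\<integral>u. (if a + u * q \<le> w then 1 else 0) \<partial>uniform_measure lborel {0..1::real})
     = max 0 (min 1 ((w - a)/q))"
proof -
  have "(\<lambda>u. if a + u * q \<le> w then 1 else 0 :: real) = indicator {..(w-a)/q}"
    using q by (auto simp: indicator_def fun_eq_iff field_simps)
  then have "(\<integral>u. (if a + u * q \<le> w then 1 else 0) \<partial>uniform_measure lborel {0..1::real})
      = measure (uniform_measure lborel {0..1::real}) {..(w-a)/q}"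
    by (simp add: Bochner_Integration.integral_indicator)
  also have "\<dots> = measure lborel ({0..1} \<inter> {..(w-a)/q})"
    by (subst measure_uniform_measure) auto
  also have "{0..1} \<inter> {..(w-a)/q} = {0..min 1 ((w-a)/q)}" by auto
  also have "measure lborel {0..min 1 ((w-a)/q)} = max 0 (min 1 ((w - a)/q))"
    by (simp add: max_def)
  finally show ?thesis .
qed

lemma dbound: fixes d :: "'a::finite \<Rightarrow> 'b::finite \<Rightarrow> real"
  shows "\<bar>d x y\<bar> \<le> (\<Sum>p\<in>UNIV. \<bar>d (fst p) (snd p)\<bar>)"
proof -
  have "\<bar>d (fst (x,y)) (snd (x,y))\<bar> \<le> (\<Sum>p\<in>UNIV. \<bar>d (fst p) (snd p)\<bar>)"
    by (rule member_le_sum) auto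
  then show ?thesis by simp
qed

lemma meas_u: "(\<lambda>u. c * (if p_c d Q x y u \<le> w then 1 else 0 :: real)) \<in> borel_measurable (uniform_measure lborel {0..1::real})"
proof -
  have "(\<lambda>u. c * (if p_c d Q x y u \<le> w then 1 else 0 :: real)) \<in> borel_measurable lborel"
    unfolding p_c_def by measurable
  then show ?thesis by (subst measurable_cong_sets[OF sets_uniform_measure refl])
qed

lemma Dtilde_integral:
  fixes P :: "'a::finite pmf" and Q :: "'b::finite pmf" and d :: "'a \<Rightarrow> 'b \<Rightarrow> real"
  shows "integral\<^sup>L (measure_pmf P \<Otimes>\<^sub>M (measure_pmf Q \<Otimes>\<^sub>M uniform_measure lborel {0..1::real}))
       (\<lambda>(x, y, u). d x y * (if p_c d Q x y u \<le> w then 1 else 0))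
   = (\<Sum>x\<in>UNIV. pmf P x * (\<Sum>y\<in>UNIV. pmf Q y * (d x y *
        (\<integral>u. (if p_c d Q x y u \<le> w then 1 else 0) \<partial>uniform_measure lborel {0..1::real}))))"
proof -
  define U where "U = uniform_measure lborel {0..1::real}"
  define B where "B = (\<Sum>p\<in>UNIV. \<bar>d (fst p) (snd p)\<bar>)"
  have U: "prob_space U" unfolding U_def by (intro prob_space_uniform_measure) auto
  have QU: "prob_space (measure_pmf Q \<Otimes>\<^sub>M U)"
    by (intro prob_space_pair measure_pmf.prob_space_axioms U)
  have bnd: "\<bar>d x y * (if b then 1 else 0)\<bar> \<le> B" for x y b
    using dbound[of d x y] by (auto simp: B_def)
  have inner: "integral\<^sup>L (measure_pmf Q \<Otimes>\<^sub>M U) (\<lambda>(y, u). d x y * (if p_c d Q x y u \<le> w then 1 else 0))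
     = (\<Sum>y\<in>UNIV. pmf Q y * integral\<^sup>L U (\<lambda>u. d x y * (if p_c d Q x y u \<le> w then 1 else 0)))" for x
    by (rule pmf_pair_integral'[OF U, where B=B]) (use bnd meas_u in \<open>auto simp: U_def\<close>)
  have "integral\<^sup>L (measure_pmf P \<Otimes>\<^sub>M (measure_pmf Q \<Otimes>\<^sub>M U)) (\<lambda>(x, y, u). d x y * (if p_c d Q x y u \<le> w then 1 else 0))
     = (\<Sum>x\<in>UNIV. pmf P x * integral\<^sup>L (measure_pmf Q \<Otimes>\<^sub>M U) (\<lambda>(y, u). d x y * (if p_c d Q x y u \<le> w then 1 else 0)))"
  proof (rule pmf_pair_integral'[OF QU, where B=B])
    fix x
    have "(\<lambda>(y, u). d x y * (if p_c d Q x y u \<le> w then 1 else 0 :: real)) \<in> borel_measurable (count_space UNIV \<Otimes>\<^sub>M U)"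
      by (rule measurable_pair_measure_countable1) (use meas_u in \<open>auto simp: U_def\<close>)
    then show "(\<lambda>(y, u). d x y * (if p_c d Q x y u \<le> w then 1 else 0)) \<in> borel_measurable (measure_pmf Q \<Otimes>\<^sub>M U)"
      by (subst measurable_cong_sets[OF sets_pair_measure_cong[OF sets_measure_pmf_count_space refl] refl]) simp
  qed (use bnd in auto)
  also have "\<dots> = (\<Sum>x\<in>UNIV. pmf P x * (\<Sum>y\<in>UNIV. pmf Q y * (d x y *
        (\<integral>u. (if p_c d Q x y u \<le> w then 1 else 0) \<partial>U))))"
    by (simp add: inner)
  finally show ?thesis by (simp add: U_def)
qed

lemma min_expect:
  fixes Q :: "'b::finite pmf" and f :: "'b \<Rightarrow> real" and M :: nat
  assumes M: "M \<ge> 1"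
  shows "measure_pmf.expectation (Pi_pmf {..<M} dflt (\<lambda>_. Q)) (\<lambda>ys. Min ((\<lambda>i. f (ys i)) ` {..<M}))
   = (\<Sum>y\<in>UNIV. pmf Q y * (f y * (((1 - measure_pmf.prob Q {y'. f y' < f y})^M
        - (1 - measure_pmf.prob Q {y'. f y' < f y} - measure_pmf.prob Q {y'. f y' = f y})^M)
        / measure_pmf.prob Q {y'. f y' = f y})))"
proof -
  define PP where "PP = Pi_pmf {..<M} dflt (\<lambda>_. Q)"
  define h where "h ys = Min ((\<lambda>i. f (ys i)) ` {..<M})" for ys :: "nat \<Rightarrow> 'b"
  define V where "V = range f"
  define a where "a v = measure_pmf.prob Q {y'. f y' < v}" for v
  define qq where "qq v = measure_pmf.prob Q {y'. f y' = v}" for v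
  have finV: "finite V" by (simp add: V_def)
  have ne: "(\<lambda>i. f (ys i)) ` {..<M} \<noteq> {}" for ys
  proof -
    have "0 \<in> {..<M}" using M by simp
    then show ?thesis by blast
  qed
  have hV: "h ys \<in> V" for ys
  proof -
    have "h ys \<in> (\<lambda>i. f (ys i)) ` {..<M}" unfolding h_def by (rule Min_in) (use ne in auto)
    then show ?thesis by (auto simp: V_def)
  qed
  have finS: "finite (set_pmf PP)"
    unfolding PP_def by (rule finite_subset[OF set_Pi_pmf_subset']) auto
  have heq: "h ys = (\<Sum>v\<in>V. v * indicator {ys. h ys = v} ys)" for ys
  proof -
    have "(\<Sum>v\<in>V. v * indicator {ys. h ys = v} ys) = (\<Sum>v\<in>V. if v = h ys then v else 0)"
      by (intro sum.cong) (auto simp: indicator_def)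
    also have "\<dots> = h ys" using finV hV[of ys] by (simp add: sum.delta)
    finally show ?thesis by simp
  qed
  have probv: "measure_pmf.prob PP {ys. h ys = v} = (1 - a v)^M - (1 - a v - qq v)^M" for v
  proof -
    have set1: "{ys. h ys = v} = Pi {..<M} (\<lambda>_. {y. v \<le> f y}) - Pi {..<M} (\<lambda>_. {y. v < f y})"
    proof -
      have "v \<le> h ys \<longleftrightarrow> (\<forall>i<M. v \<le> f (ys i))" for ys
        unfolding h_def by (subst Min_ge_iff) (use ne in auto)
      moreover have "v < h ys \<longleftrightarrow> (\<forall>i<M. v < f (ys i))" for ys
        unfolding h_def by (subst Min_gr_iff) (use ne in auto)
      ultimately show ?thesis
      proof (intro set_eqI)
        fix ys
        assume A: "\<And>ys. (v \<le> h ys) = (\<forall>i<M. v \<le> f (ys i))" "\<And>ys. (v < h ys) = (\<forall>i<M. v < f (ys i))"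
        have "h ys = v \<longleftrightarrow> v \<le> h ys \<and> \<not> v < h ys" by auto
        then show "ys \<in> {ys. h ys = v} \<longleftrightarrow> ys \<in> Pi {..<M} (\<lambda>_. {y. v \<le> f y}) - Pi {..<M} (\<lambda>_. {y. v < f y})"
          using A[of ys] by (simp add: Pi_iff) blast
      qed
    qed
    have sub: "Pi {..<M} (\<lambda>_. {y. v < f y}) \<subseteq> Pi {..<M} (\<lambda>_. {y. v \<le> f y})" by (auto simp: Pi_iff less_imp_le)
    have piS: "measure_pmf.prob PP (Pi {..<M} (\<lambda>_. S)) = (measure_pmf.prob Q S)^M" for S
      unfolding PP_def by (subst measure_Pi_pmf_Pi) (auto simp: prod_constant)
    have compl: "measure_pmf.prob Q (UNIV - S) = 1 - measure_pmf.prob Q S" for S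
      using measure_pmf.prob_compl[of S Q] by simp
    have c1: "measure_pmf.prob Q {y. v \<le> f y} = 1 - a v"
    proof -
      have "{y. v \<le> f y} = UNIV - {y. f y < v}" by auto
      then show ?thesis unfolding a_def by (simp add: compl)
    qed
    have c2: "measure_pmf.prob Q {y. v < f y} = 1 - a v - qq v"
    proof -
      have "{y. v < f y} = UNIV - ({y. f y < v} \<union> {y. f y = v})" by auto
      then have "measure_pmf.prob Q {y. v < f y} = 1 - measure_pmf.prob Q ({y. f y < v} \<union> {y. f y = v})"
        by (simp add: compl)
      also have "measure_pmf.prob Q ({y. f y < v} \<union> {y. f y = v}) = a v + qq v"
        unfolding a_def qq_def by (subst measure_pmf.finite_measure_Union) auto
      finally show ?thesis by simp
    qed
    show ?thesis
      unfolding set1 by (subst measure_pmf.finite_measure_Diff) (use sub piS c1 c2 in auto)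
  qed
  have int: "integrable (measure_pmf PP) g" for g :: "_ \<Rightarrow> real"
    by (rule integrable_measure_pmf_finite[OF finS])
  have "measure_pmf.expectation PP h = measure_pmf.expectation PP (\<lambda>ys. \<Sum>v\<in>V. v * indicator {ys. h ys = v} ys)"
    by (rule arg_cong[where f="measure_pmf.expectation PP"]) (rule ext, rule heq)
  also have "\<dots> = (\<Sum>v\<in>V. measure_pmf.expectation PP (\<lambda>ys. v * indicator {ys. h ys = v} ys))"
    by (rule Bochner_Integration.integral_sum) (rule int)
  also have "\<dots> = (\<Sum>v\<in>V. v * ((1 - a v)^M - (1 - a v - qq v)^M))"
    by (intro sum.cong refl) (simp add: probv)
  also have "\<dots> = (\<Sum>y\<in>UNIV. pmf Q y * (f y * (((1 - a (f y))^M - (1 - a (f y) - qq (f y))^M) / qq (f y))))"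
  proof -
    have "(\<Sum>y\<in>UNIV. pmf Q y * (f y * (((1 - a (f y))^M - (1 - a (f y) - qq (f y))^M) / qq (f y))))
       = (\<Sum>v\<in>V. \<Sum>y\<in>{y\<in>UNIV. f y = v}. pmf Q y * (f y * (((1 - a (f y))^M - (1 - a (f y) - qq (f y))^M) / qq (f y))))"
      unfolding V_def by (rule sum.image_gen) simp
    also have "\<dots> = (\<Sum>v\<in>V. (\<Sum>y\<in>{y. f y = v}. pmf Q y) * (v * (((1 - a v)^M - (1 - a v - qq v)^M) / qq v)))"
      by (intro sum.cong refl) (auto simp: sum_distrib_right sum_divide_distrib)
    also have "\<dots> = (\<Sum>v\<in>V. v * ((1 - a v)^M - (1 - a v - qq v)^M))"
    proof (intro sum.cong refl)
      fix v
      have qv: "(\<Sum>y\<in>{y. f y = v}. pmf Q y) = qq v"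
        unfolding qq_def by (simp add: measure_measure_pmf_finite)
      show "(\<Sum>y\<in>{y. f y = v}. pmf Q y) * (v * (((1 - a v)^M - (1 - a v - qq v)^M) / qq v))
          = v * ((1 - a v)^M - (1 - a v - qq v)^M)"
        unfolding qv by (cases "qq v = 0") auto
    qed
    finally show ?thesis by simp
  qed
  finally show ?thesis unfolding PP_def h_def[abs_def] a_def qq_def .
qed

lemma G_deriv: "deriv (G (n+2)) w = real (n+2) * (real (n+2) - 1) * w * (1-w)^n"
proof -
  have "(G (n+2) has_real_derivative real (n+2) * (real (n+2) - 1) * w * (1-w)^n) (at w)"
    unfolding G_def
    apply (rule derivative_eq_intros refl)+
    apply (simp add: algebra_simps)
    done
  then show ?thesis by (rule DERIV_imp_deriv)
qed

theorem theorem1: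
  fixes P :: "'a::finite pmf" and Q :: "'b::finite pmf"
    and d :: "'a \<Rightarrow> 'b \<Rightarrow> real" and R :: real and M :: nat
  assumes d_nonneg: "\<And>x y. d x y \<ge> 0"
    and R_nonneg: "R \<ge> 0"
    and R_int: "exp R \<in> \<int>"
    and M_def: "real M = exp R + 1"
  shows "measure_pmf.expectation (pair_pmf P (Pi_pmf {..<M} undefined (\<lambda>_. Q)))
           (\<lambda>(x, ys). Min ((\<lambda>i. d x (ys i)) ` {..<M}))
         = (LBINT w=0..1. Dtilde P d w Q * deriv (G M) w)"
proof -
  have "1 \<le> exp R" using R_nonneg by simp
  then have M2: "M \<ge> 2" using M_def by linarith
  then obtain n where Mn: "M = n + 2" using le_Suc_ex[OF M2] by (auto simp: add.commute)
  define A where "A x y = measure_pmf.prob Q {y'. d x y' < d x y}" for x y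
  define qq where "qq x y = measure_pmf.prob Q {y'. d x y' = d x y}" for x y
  define T where "T x y = ((1 - A x y)^M - (1 - A x y - qq x y)^M) / qq x y" for x y
  define cl where "cl x y w = max 0 (min 1 ((w - A x y) / qq x y))" for x y w
  define g where "g w = (\<Sum>x\<in>UNIV. \<Sum>y\<in>UNIV. (pmf P x * pmf Q y * d x y) *
      (cl x y w * (real (n+2) * (real (n+2) - 1) * (1-w)^n)))" for w
  define V where "V = (\<Sum>x\<in>UNIV. \<Sum>y\<in>UNIV. (pmf P x * pmf Q y * d x y) * T x y)"
  define PP where "PP = Pi_pmf {..<M} undefined (\<lambda>_. Q)"
  define f where "f = (\<lambda>(x, ys). Min ((\<lambda>i. d x (ys i)) ` {..<M}))"

  have finS: "finite (set_pmf PP)"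
    unfolding PP_def by (rule finite_subset[OF set_Pi_pmf_subset']) auto
  have L: "measure_pmf.expectation (pair_pmf P PP) f = V"
  proof -
    have "measure_pmf.expectation (pair_pmf P PP) f = (\<Sum>z\<in>UNIV \<times> set_pmf PP. f z * pmf (pair_pmf P PP) z)"
      by (rule integral_measure_pmf_real) (use finS in auto)
    also have "\<dots> = (\<Sum>x\<in>UNIV. \<Sum>ys\<in>set_pmf PP. f (x, ys) * pmf (pair_pmf P PP) (x, ys))"
      by (simp add: sum.cartesian_product case_prod_beta)
    also have "\<dots> = (\<Sum>x\<in>UNIV. pmf P x * (\<Sum>ys\<in>set_pmf PP. f (x, ys) * pmf PP ys))"
      by (simp add: pmf_pair sum_distrib_left mult_ac)
    also have "\<dots> = (\<Sum>x\<in>UNIV. pmf P x * measure_pmf.expectation PP (\<lambda>ys. f (x, ys)))"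
      by (intro sum.cong refl arg_cong2[where f="(*)"] integral_measure_pmf_real[symmetric]) (use finS in auto)
    also have "\<dots> = (\<Sum>x\<in>UNIV. pmf P x * (\<Sum>y\<in>UNIV. pmf Q y * (d x y * T x y)))"
      unfolding f_def PP_def T_def A_def qq_def using M2
      by (intro sum.cong refl arg_cong2[where f="(*)"]) (simp add: min_expect)
    also have "\<dots> = V"
      unfolding V_def by (simp add: sum_distrib_left mult_ac)
    finally show ?thesis .
  qed

  have qpos: "qq x y > 0" if "pmf Q y \<noteq> 0" for x y
  proof -
    have "pmf Q y \<le> sum (pmf Q) {y'. d x y' = d x y}"
      by (rule member_le_sum) auto
    moreover have "0 < pmf Q y" using that pmf_nonneg[of Q y] by linarith
    ultimately show ?thesis by (simp add: qq_def measure_measure_pmf_finite)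
  qed
  have Apos: "A x y \<ge> 0" for x y by (simp add: A_def)
  have Aq1: "A x y + qq x y \<le> 1" for x y
  proof -
    have "A x y + qq x y = measure_pmf.prob Q ({y'. d x y' < d x y} \<union> {y'. d x y' = d x y})"
      unfolding A_def qq_def by (subst measure_pmf.finite_measure_Union) auto
    also have "\<dots> \<le> 1" by simp
    finally show ?thesis .
  qed
  have pc: "p_c d Q x y u = A x y + u * qq x y" for x y u
    by (simp add: p_c_def A_def qq_def)
  have F_eq: "Dtilde P d w Q * deriv (G M) w = g w" if w: "w \<in> {0<..<1}" for w
  proof -
    have I: "pmf Q y * (d x y * (\<integral>u. (if p_c d Q x y u \<le> w then 1 else 0) \<partial>uniform_measure lborel {0..1::real}))
        = pmf Q y * (d x y * cl x y w)" for x y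
    proof (cases "pmf Q y = 0")
      case False
      then show ?thesis unfolding pc cl_def using unif_integral[OF qpos[OF False]] by simp
    qed simp
    have "Dtilde P d w Q = (1/w) * (\<Sum>x\<in>UNIV. pmf P x * (\<Sum>y\<in>UNIV. pmf Q y * (d x y * cl x y w)))"
      unfolding Dtilde_def Dtilde_integral I ..
    moreover have "deriv (G M) w = real (n+2) * (real (n+2) - 1) * w * (1-w)^n"
      unfolding Mn by (rule G_deriv)
    ultimately show ?thesis using w
      by (simp add: g_def sum_distrib_left sum_distrib_right mult_ac)
  qed
  have g_int: "(g has_integral V) {0..1}"
    unfolding g_def V_def
  proof (intro has_integral_sum ballI finite)
    fix x y
    show "((\<lambda>w. (pmf P x * pmf Q y * d x y) * (cl x y w * (real (n+2) * (real (n+2) - 1) * (1-w)^n)))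
        has_integral (pmf P x * pmf Q y * d x y) * T x y) {0..1}"
    proof (cases "pmf Q y = 0")
      case True
      then show ?thesis by simp
    next
      case False
      show ?thesis unfolding cl_def T_def Mn
        by (rule has_integral_mult_right, rule cl_integral[OF qpos[OF False] Apos]) (use Aq1 in auto)
    qed
  qed
  have g_cont: "continuous_on {0..1} g"
    unfolding g_def cl_def divide_inverse by (intro continuous_intros)
  have "(LBINT w=0..1. Dtilde P d w Q * deriv (G M) w) = (LBINT w=0..1. g w)"
    by (rule interval_integral_cong) (use F_eq in \<open>auto simp: einterval_def\<close>)
  also have "\<dots> = integral {0..1} g"
    using interval_integral_eq_integral[of 0 1 g] borel_integrable_atLeastAtMost'[OF g_cont]
    by (simp add: zero_ereal_def one_ereal_def)
  also have "\<dots> = V" using g_int by (rule integral_unique)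
  finally show ?thesis using L unfolding PP_def f_def by simp
qed

end
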